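(* Let $c>0$, $m>0$, $q\in\mathbb{R}\setminus\{0\}$, and let $E=(E_1,\dots,E_n)$ with each $E_j\in C^1(\mathbb{R})$ and $\sup_{t}\sum_j|E_j^{(k)}(t)|<E_{0,k}<\infty$ for $k\in\{0,1\}$; put $b(t)=\int_0^tqE(s)\,ds$ and, for $\xi\in\mathbb{R}^n$, $Q(t,\xi)=(c^2(\xi+b(t))^2+(mc^2)^2)^{1/2}$, $Q'=\partial_tQ$. Consider the integral equations $$B(t,\xi)=\int_0^t\Big(Q(s,\xi)-Q(s,\xi)^{-1}Q'(s,\xi)\sin B(s,\xi)\cos B(s,\xi)\Big)ds,$$ $$D(t,\xi)=\int_0^t\Big(Q(s,\xi)+Q(s,\xi)^{-1}Q'(s,\xi)\sin D(s,\xi)\cos D(s,\xi)\Big)ds.$$ Then solutions $B(\cdot,\xi)$, $D(\cdot,\xi)$ of these equations are of class $C^2(\mathbb{R})$ in $t$ (as are $A(t,\xi)=\exp(-\int_0^tQ^{-1}Q'\sin^2B\,ds)$ and $C(t,\xi)=Q(0,\xi)^{-1}\exp(-\int_0^tQ^{-1}Q'\cos^2D\,ds)$), and the solutions $B$ and $D$ of these integral equations are unique. *)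

theory Defs
  imports "HOL-Analysis.Analysis"
begin

definition oint :: "real \<Rightarrow> real \<Rightarrow> (real \<Rightarrow> 'a::real_normed_vector) \<Rightarrow> 'a" where
  "oint a b f = (if a \<le> b then integral {a..b} f else - integral {b..a} f)"

definition has_oint :: "(real \<Rightarrow> 'a::real_normed_vector) \<Rightarrow> 'a \<Rightarrow> real \<Rightarrow> real \<Rightarrow> bool" where
  "has_oint f I a b = (if a \<le> b then (f has_integral I) {a..b} else (f has_integral - I) {b..a})"

definition C2_real :: "(real \<Rightarrow> real) \<Rightarrow> bool" where
  "C2_real f = (\<exists>f' f''. (\<forall>t. (f has_real_derivative f' t) (at t) \<and> (f' has_real_derivative f'' t) (at t))
                       \<and> continuous_on UNIV f'')"

definition bfun :: "real \<Rightarrow> (real \<Rightarrow> real ^ 'n) \<Rightarrow> real \<Rightarrow> real ^ 'n" where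
  "bfun q E t = oint 0 t (\<lambda>s. q *\<^sub>R E s)"

definition Qfun :: "real \<Rightarrow> real \<Rightarrow> real \<Rightarrow> (real \<Rightarrow> real ^ 'n) \<Rightarrow> real \<Rightarrow> real ^ 'n \<Rightarrow> real" where
  "Qfun c m q E t \<xi> = sqrt (c\<^sup>2 * (norm (\<xi> + bfun q E t))\<^sup>2 + (m * c\<^sup>2)\<^sup>2)"

definition Qdt :: "real \<Rightarrow> real \<Rightarrow> real \<Rightarrow> (real \<Rightarrow> real ^ 'n) \<Rightarrow> real \<Rightarrow> real ^ 'n \<Rightarrow> real" where
  "Qdt c m q E t \<xi> = deriv (\<lambda>s. Qfun c m q E s \<xi>) t"

definition solves_B :: "real \<Rightarrow> real \<Rightarrow> real \<Rightarrow> (real \<Rightarrow> real ^ 'n) \<Rightarrow> real ^ 'n \<Rightarrow> (real \<Rightarrow> real) \<Rightarrow> bool" where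
  "solves_B c m q E \<xi> B = (\<forall>t. has_oint (\<lambda>s. Qfun c m q E s \<xi>
        - inverse (Qfun c m q E s \<xi>) * Qdt c m q E s \<xi> * sin (B s) * cos (B s)) (B t) 0 t)"

definition solves_D :: "real \<Rightarrow> real \<Rightarrow> real \<Rightarrow> (real \<Rightarrow> real ^ 'n) \<Rightarrow> real ^ 'n \<Rightarrow> (real \<Rightarrow> real) \<Rightarrow> bool" where
  "solves_D c m q E \<xi> D = (\<forall>t. has_oint (\<lambda>s. Qfun c m q E s \<xi>
        + inverse (Qfun c m q E s \<xi>) * Qdt c m q E s \<xi> * sin (D s) * cos (D s)) (D t) 0 t)"

definition Afun :: "real \<Rightarrow> real \<Rightarrow> real \<Rightarrow> (real \<Rightarrow> real ^ 'n) \<Rightarrow> real ^ 'n \<Rightarrow> (real \<Rightarrow> real) \<Rightarrow> real \<Rightarrow> real" where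
  "Afun c m q E \<xi> B t = exp (- oint 0 t (\<lambda>s. inverse (Qfun c m q E s \<xi>) * Qdt c m q E s \<xi> * (sin (B s))\<^sup>2))"

definition Cfun :: "real \<Rightarrow> real \<Rightarrow> real \<Rightarrow> (real \<Rightarrow> real ^ 'n) \<Rightarrow> real ^ 'n \<Rightarrow> (real \<Rightarrow> real) \<Rightarrow> real \<Rightarrow> real" where
  "Cfun c m q E \<xi> D t = inverse (Qfun c m q E 0 \<xi>)
      * exp (- oint 0 t (\<lambda>s. inverse (Qfun c m q E s \<xi>) * Qdt c m q E s \<xi> * (cos (D s))\<^sup>2))"

end

theory Submission
  imports Defs
begin

lemma oint_split:
  fixes f :: "real \<Rightarrow> 'a::banach"
  assumes "a' \<le> a" "a' \<le> t" "\<And>u v. f integrable_on {u..v}"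
  shows "oint a t f = integral {a'..t} f - integral {a'..a} f"
proof (cases "a \<le> t")
  case True
  have "integral {a'..a} f + integral {a..t} f = integral {a'..t} f"
    using Henstock_Kurzweil_Integration.integral_combine[where a=a' and c=a and b=t and f=f] assms True by auto
  then show ?thesis using True by (simp add: oint_def algebra_simps)
next
  case False
  have "integral {a'..t} f + integral {t..a} f = integral {a'..a} f"
    using Henstock_Kurzweil_Integration.integral_combine[where a=a' and c=t and b=a and f=f] assms False by auto
  then show ?thesis using False by (simp add: oint_def algebra_simps)
qed

lemma oint_deriv:
  fixes f :: "real \<Rightarrow> 'a::banach"
  assumes f: "continuous_on UNIV f"
  shows "((\<lambda>t. oint a t f) has_vector_derivative f x) (at x)"
proof -
  define a' where "a' = min a x - 1"
  have int: "\<And>u v. f integrable_on {u..v}"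
    by (rule integrable_continuous_real) (rule continuous_on_subset[OF f], auto)
  have "a' < x" by (simp add: a'_def)
  have "((\<lambda>u. integral {a'..u} f) has_vector_derivative f x) (at x within {a'..x+1})"
    by (rule integral_has_vector_derivative) (rule continuous_on_subset[OF f], auto simp: a'_def)
  hence "((\<lambda>u. integral {a'..u} f) has_vector_derivative f x) (at x within {a'<..<x+1})"
    by (rule has_vector_derivative_within_subset) auto
  hence d1: "((\<lambda>u. integral {a'..u} f) has_vector_derivative f x) (at x)"
  proof -
    have "at x within {a'<..<x+1} = at x"
      by (rule at_within_open) (use \<open>a' < x\<close> in auto)
    thus ?thesis using \<open>((\<lambda>u. integral {a'..u} f) has_vector_derivative f x) (at x within {a'<..<x+1})\<close> by simp
  qed
  have d2: "((\<lambda>u. integral {a'..u} f - integral {a'..a} f) has_vector_derivative f x) (at x)"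
    using has_vector_derivative_diff[OF d1 has_vector_derivative_const[of "integral {a'..a} f"]]
    by simp
  show ?thesis
    by (rule has_vector_derivative_transform_within_open[OF d2, of "{a'<..}"])
       (use oint_split[OF _ _ int, of a' a] in \<open>auto simp: a'_def\<close>)
qed

lemma has_oint_unique:
  fixes f :: "real \<Rightarrow> 'a::banach"
  assumes "has_oint f I a t" shows "I = oint a t f"
  using assms unfolding has_oint_def oint_def
  by (auto split: if_splits dest: integral_unique)

lemma has_oint_cont:
  fixes f :: "real \<Rightarrow> 'a::banach"
  assumes h: "\<And>t. has_oint f (B t) 0 t"
  shows "continuous_on UNIV B"
proof -
  have intp: "f integrable_on {0..T}" if "T \<ge> 0" for T
    using h[of T] that by (auto simp: has_oint_def)
  have intn: "f integrable_on {-T..0}" if "T \<ge> 0" for T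
    using h[of "-T"] that by (auto simp: has_oint_def split: if_splits)
  have "isCont B x" for x
  proof -
    define T where "T = \<bar>x\<bar> + 1"
    have T: "T \<ge> 0" by (simp add: T_def)
    have iT: "f integrable_on {-T..T}"
      using Henstock_Kurzweil_Integration.integrable_combine[where a="-T" and c=0 and b=T and f=f] T intp intn by auto
    have sub: "\<And>u v. -T \<le> u \<Longrightarrow> v \<le> T \<Longrightarrow> f integrable_on {u..v}"
      by (rule integrable_on_subinterval[OF iT]) auto
    have eq: "B t = integral {-T..t} f - integral {-T..0} f" if "t \<in> {-T..T}" for t
    proof -
      have "B t = oint 0 t f" using has_oint_unique[OF h] .
      also have "\<dots> = integral {-T..t} f - integral {-T..0} f"
      proof (cases "0 \<le> t")
        case True
        have "integral {-T..0} f + integral {0..t} f = integral {-T..t} f"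
          using Henstock_Kurzweil_Integration.integral_combine[where a="-T" and c=0 and b=t and f=f] that T True sub by auto
        then show ?thesis using True by (simp add: oint_def algebra_simps)
      next
        case False
        have "integral {-T..t} f + integral {t..0} f = integral {-T..0} f"
          using Henstock_Kurzweil_Integration.integral_combine[where a="-T" and c=t and b=0 and f=f] that T False sub by auto
        then show ?thesis using False by (simp add: oint_def algebra_simps)
      qed
      finally show ?thesis .
    qed
    have "continuous_on {-T..T} (\<lambda>t. integral {-T..t} f - integral {-T..0} f)"
      by (intro continuous_intros indefinite_integral_continuous_1 iT)
    hence "continuous_on {-T..T} B"
      by (rule continuous_on_eq) (simp add: eq)
    moreover have "x \<in> interior {-T..T}" by (auto simp: T_def)
    ultimately show ?thesis using continuous_on_interior by blast
  qed
  thus ?thesis by (simp add: continuous_at_imp_continuous_on)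
qed


definition C1r :: "(real \<Rightarrow> real) \<Rightarrow> bool" where
  "C1r f = (\<exists>f'. (\<forall>t. (f has_real_derivative f' t) (at t)) \<and> continuous_on UNIV f')"

lemma C1rI: "(\<And>t. (f has_real_derivative f' t) (at t)) \<Longrightarrow> continuous_on UNIV f' \<Longrightarrow> C1r f"
  unfolding C1r_def by blast

lemma C1r_cont: "C1r f \<Longrightarrow> continuous_on UNIV f"
  unfolding C1r_def
  by (metis DERIV_isCont continuous_at_imp_continuous_on)

lemma C1r_const: "C1r (\<lambda>t. a)"
  by (rule C1rI[where f'="\<lambda>t. 0"]) (auto intro!: derivative_eq_intros continuous_intros)

lemma C1r_add: "C1r f \<Longrightarrow> C1r g \<Longrightarrow> C1r (\<lambda>t. f t + g t)"
  unfolding C1r_def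
  apply (elim exE conjE)
  subgoal for f' g'
    by (rule exI[where x="\<lambda>t. f' t + g' t"]) (auto intro!: derivative_eq_intros continuous_intros)
  done

lemma C1r_minus: "C1r f \<Longrightarrow> C1r (\<lambda>t. - f t)"
  unfolding C1r_def
  apply (elim exE conjE)
  subgoal for f'
    by (rule exI[where x="\<lambda>t. - f' t"]) (auto intro!: derivative_eq_intros continuous_intros)
  done

lemma C1r_mult: "C1r f \<Longrightarrow> C1r g \<Longrightarrow> C1r (\<lambda>t. f t * g t)"
proof -
  assume f: "C1r f" and g: "C1r g"
  have cf: "continuous_on UNIV f" and cg: "continuous_on UNIV g" using f g by (auto intro: C1r_cont)
  from f g obtain f' g' where df: "\<And>t. (f has_real_derivative f' t) (at t)" and cf': "continuous_on UNIV f'"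
    and dg: "\<And>t. (g has_real_derivative g' t) (at t)" and cg': "continuous_on UNIV g'"
    unfolding C1r_def by blast
  show ?thesis
    by (rule C1rI[where f'="\<lambda>t. f' t * g t + f t * g' t"])
       (auto intro!: derivative_eq_intros continuous_intros df dg cf cg cf' cg')
qed

lemma C1r_sum: "finite S \<Longrightarrow> (\<And>i. i \<in> S \<Longrightarrow> C1r (f i)) \<Longrightarrow> C1r (\<lambda>t. \<Sum>i\<in>S. f i t)"
  by (induction S rule: finite_induct) (auto intro: C1r_add C1r_const)

lemma C1r_compose:
  assumes f: "C1r f" and dg: "\<And>x. (g has_real_derivative g' x) (at x)" and cg': "continuous_on UNIV g'"
  shows "C1r (\<lambda>t. g (f t))"
proof -
  have cf: "continuous_on UNIV f" using f by (rule C1r_cont)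
  from f obtain f' where df: "\<And>t. (f has_real_derivative f' t) (at t)" and cf': "continuous_on UNIV f'"
    unfolding C1r_def by blast
  have "continuous_on UNIV (\<lambda>t. g' (f t))"
    using continuous_on_compose2[OF cg' cf] by auto
  then show ?thesis
    by (intro C1rI[where f'="\<lambda>t. g' (f t) * f' t"] continuous_intros cf')
       (rule DERIV_chain2[OF dg df])
qed

lemma C1r_sin: "C1r f \<Longrightarrow> C1r (\<lambda>t. sin (f t))"
  by (rule C1r_compose[where g=sin and g'=cos]) (auto intro: DERIV_sin continuous_intros)

lemma C1r_cos: "C1r f \<Longrightarrow> C1r (\<lambda>t. cos (f t))"
  by (rule C1r_compose[where g=cos and g'="\<lambda>x. - sin x"]) (auto intro!: DERIV_cos continuous_intros)

lemma C1r_exp: "C1r f \<Longrightarrow> C1r (\<lambda>t. exp (f t))"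
  by (rule C1r_compose[where g=exp and g'=exp]) (auto intro: DERIV_exp continuous_intros)

lemma C1r_inverse:
  assumes f: "C1r f" and nz: "\<And>t. f t \<noteq> 0"
  shows "C1r (\<lambda>t. inverse (f t))"
proof -
  have cf: "continuous_on UNIV f" using f by (rule C1r_cont)
  from f obtain f' where df: "\<And>t. (f has_real_derivative f' t) (at t)" and cf': "continuous_on UNIV f'"
    unfolding C1r_def by blast
  show ?thesis
    by (rule C1rI[where f'="\<lambda>t. - (inverse (f t) * f' t * inverse (f t))"])
       (auto intro!: derivative_eq_intros continuous_intros df cf cf' nz)
qed

lemma C1r_sqrt:
  assumes f: "C1r f" and pos: "\<And>t. f t > 0"
  shows "C1r (\<lambda>t. sqrt (f t))"
proof -
  have cf: "continuous_on UNIV f" using f by (rule C1r_cont)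
  from f obtain f' where df: "\<And>t. (f has_real_derivative f' t) (at t)" and cf': "continuous_on UNIV f'"
    unfolding C1r_def by blast
  have nz: "\<And>t. sqrt (f t) \<noteq> 0" using pos by (metis less_irrefl real_sqrt_eq_zero_cancel_iff)
  have d: "\<And>t. ((\<lambda>t. sqrt (f t)) has_real_derivative inverse (sqrt (f t)) / 2 * f' t) (at t)"
    by (rule DERIV_chain2[OF DERIV_real_sqrt df]) (rule pos)
  show ?thesis
    by (rule C1rI[OF d]) (auto intro!: continuous_intros pos cf cf' nz)
qed

lemma C2_realI:
  assumes "\<And>t. (f has_real_derivative g t) (at t)" "C1r g"
  shows "C2_real f"
  using assms unfolding C2_real_def C1r_def by blast

lemma sc_lip: fixes a b :: real shows "\<bar>sin a * cos a - sin b * cos b\<bar> \<le> \<bar>a - b\<bar>"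
proof -
  have gen: "\<bar>sin y * cos y - sin x * cos x\<bar> \<le> y - x" if "x < y" for x y :: real
  proof -
    have "\<And>z. x \<le> z \<Longrightarrow> z \<le> y \<Longrightarrow> DERIV (\<lambda>u. sin u * cos u) z :> (cos z * cos z - sin z * sin z)"
      by (auto intro!: derivative_eq_intros)
    from MVT2[OF that this] obtain z where
      "sin y * cos y - sin x * cos x = (y - x) * (cos z * cos z - sin z * sin z)" by blast
    moreover have "\<bar>cos z * cos z - sin z * sin z\<bar> \<le> 1"
      using cos_double[of z] abs_cos_le_one[of "2*z"] by (simp add: power2_eq_square)
    ultimately show ?thesis using that
      by (simp add: abs_mult)
  qed
  consider "a < b" | "a = b" | "b < a" by linarith
  then show ?thesis
  proof cases
    case 1 then show ?thesis using gen[of a b] by (simp add: abs_minus_commute)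
  next
    case 3 then show ?thesis using gen[of b a] by simp
  qed simp
qed


lemma oint_deriv_real:
  fixes f :: "real \<Rightarrow> real"
  assumes "continuous_on UNIV f"
  shows "((\<lambda>t. oint a t f) has_real_derivative f x) (at x)"
  using oint_deriv[OF assms] by (simp add: has_real_derivative_iff_has_vector_derivative)

lemma has_oint_zero: "has_oint f I 0 0 \<Longrightarrow> I = (0::real)"
  by (drule has_oint_unique) (simp add: oint_def)

lemma gronwall0:
  fixes w w' :: "real \<Rightarrow> real"
  assumes d: "\<And>s. (w has_real_derivative w' s) (at s)" and w0: "w 0 = 0"
    and b: "\<And>s. s \<in> {-T..T} \<Longrightarrow> \<bar>w' s\<bar> \<le> L * \<bar>w s\<bar>" and t0: "\<bar>t0\<bar> \<le> T" and L: "L \<ge> 0"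
  shows "w t0 = 0"
proof (cases "t0 \<ge> 0")
  case True
  define u where "u s = (w s)\<^sup>2 * exp (- (2 * L * s))" for s
  have "u t0 \<le> u 0"
  proof (rule DERIV_nonpos_imp_nonincreasing[of 0 t0, OF True])
    fix s assume s: "0 \<le> s" "s \<le> t0"
    have du: "(u has_real_derivative (2 * w s * w' s * exp (- (2 * L * s)) + (w s)\<^sup>2 * (exp (- (2 * L * s)) * (- (2 * L))))) (at s)"
      unfolding u_def by (auto intro!: derivative_eq_intros d)
    have "w s * w' s \<le> \<bar>w s\<bar> * \<bar>w' s\<bar>" by (metis abs_ge_self abs_mult)
    also have "\<dots> \<le> \<bar>w s\<bar> * (L * \<bar>w s\<bar>)" using b[of s] s t0 by (intro mult_left_mono) auto
    also have "\<dots> = L * (w s)\<^sup>2" by (simp add: power2_eq_square)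
    finally have "w s * w' s \<le> L * (w s)\<^sup>2" .
    have e: "2 * w s * w' s * exp (- (2 * L * s)) + (w s)\<^sup>2 * (exp (- (2 * L * s)) * (- (2 * L)))
       = (2 * exp (- (2 * L * s))) * (w s * w' s - L * (w s)\<^sup>2)" by (simp add: algebra_simps)
    have "(2 * exp (- (2 * L * s))) * (w s * w' s - L * (w s)\<^sup>2) \<le> 0"
      using \<open>w s * w' s \<le> L * (w s)\<^sup>2\<close> by (intro mult_nonneg_nonpos) auto
    hence "2 * w s * w' s * exp (- (2 * L * s)) + (w s)\<^sup>2 * (exp (- (2 * L * s)) * (- (2 * L))) \<le> 0"
      by (simp only: e)
    with du show "\<exists>y. DERIV u s :> y \<and> y \<le> 0" by blast
  qed
  hence "(w t0)\<^sup>2 * exp (- (2 * L * t0)) \<le> 0" by (simp add: u_def w0)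
  hence "(w t0)\<^sup>2 \<le> 0" by (simp add: mult_le_0_iff)
  thus ?thesis by simp
next
  case False
  define u where "u s = (w s)\<^sup>2 * exp (2 * L * s)" for s
  have "u t0 \<le> u 0"
  proof (rule DERIV_nonneg_imp_nondecreasing[of t0 0])
    show "t0 \<le> 0" using False by simp
    fix s assume s: "t0 \<le> s" "s \<le> 0"
    have du: "(u has_real_derivative (2 * w s * w' s * exp (2 * L * s) + (w s)\<^sup>2 * (exp (2 * L * s) * (2 * L)))) (at s)"
      unfolding u_def by (auto intro!: derivative_eq_intros d)
    have "- (w s * w' s) \<le> \<bar>w s\<bar> * \<bar>w' s\<bar>" by (metis abs_ge_minus_self abs_mult)
    also have "\<dots> \<le> \<bar>w s\<bar> * (L * \<bar>w s\<bar>)" using b[of s] s t0 False by (intro mult_left_mono) auto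
    also have "\<dots> = L * (w s)\<^sup>2" by (simp add: power2_eq_square)
    finally have h: "- (w s * w' s) \<le> L * (w s)\<^sup>2" .
    have e: "2 * w s * w' s * exp (2 * L * s) + (w s)\<^sup>2 * (exp (2 * L * s) * (2 * L))
       = (2 * exp (2 * L * s)) * (w s * w' s + L * (w s)\<^sup>2)" by (simp add: algebra_simps)
    have "0 \<le> (2 * exp (2 * L * s)) * (w s * w' s + L * (w s)\<^sup>2)"
      using h by (intro mult_nonneg_nonneg) auto
    hence "0 \<le> 2 * w s * w' s * exp (2 * L * s) + (w s)\<^sup>2 * (exp (2 * L * s) * (2 * L))"
      by (simp only: e)
    with du show "\<exists>y. DERIV u s :> y \<and> 0 \<le> y" by blast
  qed
  hence "(w t0)\<^sup>2 * exp (2 * L * t0) \<le> 0" by (simp add: u_def w0)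
  hence "(w t0)\<^sup>2 \<le> 0" by (simp add: mult_le_0_iff)
  thus ?thesis by simp
qed


lemma ode_C2:
  fixes Q Qd B :: "real \<Rightarrow> real" and k :: real
  assumes Q: "C1r Q" "\<And>t. Q t \<noteq> 0" and Qd: "C1r Qd"
   and sol: "\<And>t. has_oint (\<lambda>s. Q s + k * (inverse (Q s) * Qd s * sin (B s) * cos (B s))) (B t) 0 t"
  shows "C1r B \<and> C2_real B \<and> (\<forall>t. (B has_real_derivative (Q t + k * (inverse (Q t) * Qd t * sin (B t) * cos (B t)))) (at t))"
proof -
  define g where "g s = Q s + k * (inverse (Q s) * Qd s * sin (B s) * cos (B s))" for s
  have cB: "continuous_on UNIV B" using has_oint_cont[OF sol] .
  have cQ: "continuous_on UNIV Q" and cQd: "continuous_on UNIV Qd" using Q Qd by (auto intro: C1r_cont)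
  have cg: "continuous_on UNIV g" unfolding g_def
    by (intro continuous_intros cB cQ cQd) (use Q in auto)
  have gl: "g = (\<lambda>s. Q s + k * (inverse (Q s) * Qd s * sin (B s) * cos (B s)))"
    by (rule ext) (simp only: g_def)
  have Bt: "B t = oint 0 t g" for t
    unfolding gl by (rule has_oint_unique[OF sol])
  have Beq: "B = (\<lambda>t. oint 0 t g)" by (rule ext) (rule Bt)
  have dB: "\<And>t. (B has_real_derivative g t) (at t)"
    by (subst Beq) (rule oint_deriv_real[OF cg])
  have C1B: "C1r B" by (rule C1rI[OF dB cg])
  have C1g: "C1r g" unfolding g_def
    by (intro C1r_add C1r_mult C1r_const C1r_inverse C1r_sin C1r_cos Q Qd C1B)
  show ?thesis using C1B C2_realI[OF dB C1g] dB by (simp add: g_def)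
qed

lemma exp_C2:
  fixes h :: "real \<Rightarrow> real"
  assumes h: "C1r h"
  shows "C2_real (\<lambda>t. K * exp (- oint 0 t h))"
proof -
  have ch: "continuous_on UNIV h" using h by (rule C1r_cont)
  have dO: "\<And>t. ((\<lambda>t. oint 0 t h) has_real_derivative h t) (at t)" by (rule oint_deriv_real[OF ch])
  have C1O: "C1r (\<lambda>t. oint 0 t h)" by (rule C1rI[OF dO ch])
  have d: "\<And>t. ((\<lambda>t. K * exp (- oint 0 t h)) has_real_derivative K * (exp (- oint 0 t h) * (- h t))) (at t)"
    by (auto intro!: derivative_eq_intros dO)
  have "C1r (\<lambda>t. K * (exp (- oint 0 t h) * (- h t)))"
    by (intro C1r_mult C1r_const C1r_exp C1r_minus C1O h)
  thus ?thesis by (rule C2_realI[OF d])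
qed

lemma ode_unique:
  fixes Q Qd B1 B2 :: "real \<Rightarrow> real" and k :: real
  assumes Q: "C1r Q" "\<And>t. Q t \<noteq> 0" and Qd: "C1r Qd" and k: "\<bar>k\<bar> \<le> 1"
   and sol1: "\<And>t. has_oint (\<lambda>s. Q s + k * (inverse (Q s) * Qd s * sin (B1 s) * cos (B1 s))) (B1 t) 0 t"
   and sol2: "\<And>t. has_oint (\<lambda>s. Q s + k * (inverse (Q s) * Qd s * sin (B2 s) * cos (B2 s))) (B2 t) 0 t"
  shows "B1 = B2"
proof
  fix t0 :: real
  define T where "T = \<bar>t0\<bar>"
  define P where "P s = inverse (Q s) * Qd s" for s
  have cQ: "continuous_on UNIV Q" and cQd: "continuous_on UNIV Qd" using Q Qd by (auto intro: C1r_cont)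
  have cP: "continuous_on {-T..T} P" unfolding P_def
    by (intro continuous_intros continuous_on_subset[OF cQ] continuous_on_subset[OF cQd]) (use Q in auto)
  obtain L where L: "L \<ge> 0" "\<And>s. s \<in> {-T..T} \<Longrightarrow> norm (P s) \<le> L"
    using continuous_on_compact_bound[OF compact_Icc cP] by blast
  have d1: "\<And>t. (B1 has_real_derivative (Q t + k * (inverse (Q t) * Qd t * sin (B1 t) * cos (B1 t)))) (at t)"
    using ode_C2[OF Q Qd sol1] by blast
  have d2: "\<And>t. (B2 has_real_derivative (Q t + k * (inverse (Q t) * Qd t * sin (B2 t) * cos (B2 t)))) (at t)"
    using ode_C2[OF Q Qd sol2] by blast
  define w' where "w' t = (Q t + k * (inverse (Q t) * Qd t * sin (B1 t) * cos (B1 t)))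
     - (Q t + k * (inverse (Q t) * Qd t * sin (B2 t) * cos (B2 t)))" for t
  have dw: "\<And>s. ((\<lambda>t. B1 t - B2 t) has_real_derivative w' s) (at s)"
    unfolding w'_def by (rule DERIV_diff[OF d1 d2])
  have w0: "B1 0 - B2 0 = 0" using has_oint_zero[OF sol1] has_oint_zero[OF sol2] by simp
  have b: "\<bar>w' s\<bar> \<le> L * \<bar>B1 s - B2 s\<bar>" if s: "s \<in> {-T..T}" for s
  proof -
    have "w' s = k * (P s * (sin (B1 s) * cos (B1 s) - sin (B2 s) * cos (B2 s)))"
      by (simp add: w'_def P_def algebra_simps)
    hence "\<bar>w' s\<bar> = \<bar>k\<bar> * (\<bar>P s\<bar> * \<bar>sin (B1 s) * cos (B1 s) - sin (B2 s) * cos (B2 s)\<bar>)"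
      by (simp add: abs_mult)
    also have "\<dots> \<le> 1 * (L * \<bar>B1 s - B2 s\<bar>)"
      using L(2)[OF s] sc_lip[of "B1 s" "B2 s"] k
      by (intro mult_mono) (auto intro: mult_mono)
    finally show ?thesis by simp
  qed
  have tT: "\<bar>t0\<bar> \<le> T" by (simp add: T_def)
  have "B1 t0 - B2 t0 = 0"
    using gronwall0[where w="\<lambda>t. B1 t - B2 t", OF dw w0 b tT L(1)] by simp
  thus "B1 t0 = B2 t0" by simp
qed


lemma C1r_power2: "C1r f \<Longrightarrow> C1r (\<lambda>t. (f t)\<^sup>2)"
  unfolding power2_eq_square by (rule C1r_mult)

lemma E_facts:
  fixes E :: "real \<Rightarrow> real ^ 'n"
  assumes C1: "\<forall>j. (\<lambda>t. E t $ j) C1_differentiable_on UNIV"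
  shows "continuous_on UNIV E" and "\<And>j. C1r (\<lambda>t. E t $ j)"
proof -
  show C: "C1r (\<lambda>t. E t $ j)" for j
  proof -
    from C1 obtain D where "\<forall>x\<in>UNIV. ((\<lambda>t. E t $ j) has_vector_derivative D x) (at x)"
      and "continuous_on UNIV D" unfolding C1_differentiable_on_def by blast
    thus ?thesis unfolding C1r_def has_real_derivative_iff_has_vector_derivative by blast
  qed
  have "continuous_on UNIV (\<lambda>t. \<chi> j. E t $ j)"
    by (intro continuous_on_vec_lambda C1r_cont C)
  thus "continuous_on UNIV E" by simp
qed

lemma bfun_comp_deriv:
  fixes E :: "real \<Rightarrow> real ^ 'n"
  assumes "continuous_on UNIV E"
  shows "((\<lambda>t. bfun q E t $ j) has_real_derivative q * E t $ j) (at t)"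
proof -
  have "((\<lambda>t. bfun q E t) has_vector_derivative q *\<^sub>R E t) (at t)"
    unfolding bfun_def by (rule oint_deriv) (intro continuous_intros assms)
  from bounded_linear.has_vector_derivative[OF bounded_linear_vec_nth this, of j]
  show ?thesis by (simp add: has_real_derivative_iff_has_vector_derivative)
qed

lemma norm_sq_cart: "(norm (x :: real ^ 'n))\<^sup>2 = (\<Sum>j\<in>UNIV. (x $ j)\<^sup>2)"
  unfolding power2_norm_eq_inner inner_vec_def by (simp add: power2_eq_square)

lemma Q_facts:
  fixes E :: "real \<Rightarrow> real ^ 'n" and \<xi> :: "real ^ 'n"
  assumes C1: "\<forall>j. (\<lambda>t. E t $ j) C1_differentiable_on UNIV" and c: "c > 0" and m: "m > 0"
  shows "C1r (\<lambda>t. Qfun c m q E t \<xi>)" "C1r (\<lambda>t. Qdt c m q E t \<xi>)" "\<And>t. Qfun c m q E t \<xi> \<noteq> 0"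
proof -
  have Ec: "continuous_on UNIV E" and Ej: "\<And>j. C1r (\<lambda>t. E t $ j)" using E_facts[OF C1] by auto
  define v where "v j t = \<xi> $ j + bfun q E t $ j" for j t
  have dv: "\<And>j t. (v j has_real_derivative q * E t $ j) (at t)"
    unfolding v_def by (auto intro!: derivative_eq_intros bfun_comp_deriv[OF Ec])
  have C1v: "C1r (v j)" for j
    by (rule C1rI[OF dv]) (intro continuous_intros C1r_cont Ej)
  define N where "N t = (\<Sum>j\<in>UNIV. (v j t)\<^sup>2)" for t
  define Nd where "Nd t = (\<Sum>j\<in>UNIV. 2 * v j t * (q * E t $ j))" for t
  have dN: "(N has_real_derivative Nd t) (at t)" for t
    unfolding N_def Nd_def
    by (auto intro!: derivative_eq_intros dv sum.cong simp: power2_eq_square mult_ac)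
  have C1N: "C1r N" unfolding N_def by (intro C1r_sum C1r_power2 C1v) simp
  have C1Nd: "C1r Nd" unfolding Nd_def by (intro C1r_sum C1r_mult C1r_const C1v Ej) simp
  define R where "R t = c\<^sup>2 * N t + (m * c\<^sup>2)\<^sup>2" for t
  have Rpos: "R t > 0" for t
  proof -
    have "N t \<ge> 0" unfolding N_def by (intro sum_nonneg) auto
    moreover have "(m * c\<^sup>2)\<^sup>2 > 0" using m c by simp
    ultimately show ?thesis unfolding R_def by (simp add: add_nonneg_pos)
  qed
  have Qeq: "Qfun c m q E t \<xi> = sqrt (R t)" for t
    unfolding Qfun_def R_def N_def v_def by (simp add: norm_sq_cart)
  have Qeq': "(\<lambda>t. Qfun c m q E t \<xi>) = (\<lambda>t. sqrt (R t))" using Qeq by (rule ext)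
  have dR: "(R has_real_derivative c\<^sup>2 * Nd t) (at t)" for t
    unfolding R_def by (auto intro!: derivative_eq_intros dN)
  have C1R: "C1r R" unfolding R_def by (intro C1r_add C1r_mult C1r_const C1N)
  have dQ: "((\<lambda>t. Qfun c m q E t \<xi>) has_real_derivative inverse (sqrt (R t)) / 2 * (c\<^sup>2 * Nd t)) (at t)" for t
    unfolding Qeq' by (rule DERIV_chain2[OF DERIV_real_sqrt dR]) (rule Rpos)
  have Qdeq: "(\<lambda>t. Qdt c m q E t \<xi>) = (\<lambda>t. inverse (sqrt (R t)) / 2 * (c\<^sup>2 * Nd t))"
    unfolding Qdt_def by (rule ext) (rule DERIV_imp_deriv[OF dQ])
  have nz: "sqrt (R t) \<noteq> 0" for t using Rpos[of t] by simp
  show "C1r (\<lambda>t. Qfun c m q E t \<xi>)" unfolding Qeq' by (rule C1r_sqrt[OF C1R Rpos])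
  show "C1r (\<lambda>t. Qdt c m q E t \<xi>)" unfolding Qdeq divide_real_def
    by (intro C1r_mult C1r_inverse C1r_const C1r_sqrt C1R Rpos nz C1Nd)
  show "Qfun c m q E t \<xi> \<noteq> 0" for t using nz Qeq by simp
qed


theorem lemma3p1:
  fixes c m q E00 E01 :: real and E :: "real \<Rightarrow> real ^ 'n"
  assumes "c > 0" and "m > 0" and "q \<noteq> 0"
    and C1: "\<forall>j. (\<lambda>t. E t $ j) C1_differentiable_on UNIV"
    and bdd0: "bdd_above (range (\<lambda>t. \<Sum>j\<in>UNIV. \<bar>E t $ j\<bar>))"
    and sup0: "(SUP t. \<Sum>j\<in>UNIV. \<bar>E t $ j\<bar>) < E00"
    and bdd1: "bdd_above (range (\<lambda>t. \<Sum>j\<in>UNIV. \<bar>deriv (\<lambda>s. E s $ j) t\<bar>))"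
    and sup1: "(SUP t. \<Sum>j\<in>UNIV. \<bar>deriv (\<lambda>s. E s $ j) t\<bar>) < E01"
  shows "\<forall>\<xi> :: real ^ 'n.
     (\<forall>B. solves_B c m q E \<xi> B \<longrightarrow> C2_real B \<and> C2_real (Afun c m q E \<xi> B))
   \<and> (\<forall>D. solves_D c m q E \<xi> D \<longrightarrow> C2_real D \<and> C2_real (Cfun c m q E \<xi> D))
   \<and> (\<forall>B1 B2. solves_B c m q E \<xi> B1 \<and> solves_B c m q E \<xi> B2 \<longrightarrow> B1 = B2)
   \<and> (\<forall>D1 D2. solves_D c m q E \<xi> D1 \<and> solves_D c m q E \<xi> D2 \<longrightarrow> D1 = D2)"
proof (intro allI)
  fix \<xi> :: "real ^ 'n"
  define Q where "Q t = Qfun c m q E t \<xi>" for t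
  define Qd where "Qd t = Qdt c m q E t \<xi>" for t
  have Q1: "C1r Q" and Qd1: "C1r Qd" and Qnz: "\<And>t. Q t \<noteq> 0"
    using Q_facts[OF C1 assms(1,2), where q=q and \<xi>=\<xi>] unfolding Q_def[abs_def] Qd_def[abs_def] by auto
  have SB: "solves_B c m q E \<xi> B \<longleftrightarrow>
     (\<forall>t. has_oint (\<lambda>s. Q s + (-1) * (inverse (Q s) * Qd s * sin (B s) * cos (B s))) (B t) 0 t)" for B
  proof -
    have "(\<lambda>s. Qfun c m q E s \<xi> - inverse (Qfun c m q E s \<xi>) * Qdt c m q E s \<xi> * sin (B s) * cos (B s))
      = (\<lambda>s. Q s + (-1) * (inverse (Q s) * Qd s * sin (B s) * cos (B s)))"
      by (simp add: Q_def Qd_def)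
    thus ?thesis unfolding solves_B_def by simp
  qed
  have SD: "solves_D c m q E \<xi> D \<longleftrightarrow>
     (\<forall>t. has_oint (\<lambda>s. Q s + 1 * (inverse (Q s) * Qd s * sin (D s) * cos (D s))) (D t) 0 t)" for D
  proof -
    have "(\<lambda>s. Qfun c m q E s \<xi> + inverse (Qfun c m q E s \<xi>) * Qdt c m q E s \<xi> * sin (D s) * cos (D s))
      = (\<lambda>s. Q s + 1 * (inverse (Q s) * Qd s * sin (D s) * cos (D s)))"
      by (simp add: Q_def Qd_def)
    thus ?thesis unfolding solves_D_def by simp
  qed
  have AF: "Afun c m q E \<xi> B = (\<lambda>t. 1 * exp (- oint 0 t (\<lambda>s. inverse (Q s) * Qd s * (sin (B s))\<^sup>2)))" for B
    by (simp add: Afun_def Q_def Qd_def fun_eq_iff)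
  have CF: "Cfun c m q E \<xi> D = (\<lambda>t. inverse (Q 0) * exp (- oint 0 t (\<lambda>s. inverse (Q s) * Qd s * (cos (D s))\<^sup>2)))" for D
    by (simp add: Cfun_def Q_def Qd_def fun_eq_iff)
  show "(\<forall>B. solves_B c m q E \<xi> B \<longrightarrow> C2_real B \<and> C2_real (Afun c m q E \<xi> B))
   \<and> (\<forall>D. solves_D c m q E \<xi> D \<longrightarrow> C2_real D \<and> C2_real (Cfun c m q E \<xi> D))
   \<and> (\<forall>B1 B2. solves_B c m q E \<xi> B1 \<and> solves_B c m q E \<xi> B2 \<longrightarrow> B1 = B2)
   \<and> (\<forall>D1 D2. solves_D c m q E \<xi> D1 \<and> solves_D c m q E \<xi> D2 \<longrightarrow> D1 = D2)"
  proof (intro conjI allI impI)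
    fix B assume "solves_B c m q E \<xi> B"
    hence sol: "\<And>t. has_oint (\<lambda>s. Q s + (-1) * (inverse (Q s) * Qd s * sin (B s) * cos (B s))) (B t) 0 t"
      using SB by blast
    have r: "C1r B \<and> C2_real B" using ode_C2[OF Q1 Qnz Qd1 sol] by blast
    thus "C2_real B" by blast
    have "C1r (\<lambda>s. inverse (Q s) * Qd s * (sin (B s))\<^sup>2)"
      using r by (intro C1r_mult C1r_inverse C1r_power2 C1r_sin Q1 Qd1 Qnz) auto
    thus "C2_real (Afun c m q E \<xi> B)" unfolding AF by (rule exp_C2)
  next
    fix D assume "solves_D c m q E \<xi> D"
    hence sol: "\<And>t. has_oint (\<lambda>s. Q s + 1 * (inverse (Q s) * Qd s * sin (D s) * cos (D s))) (D t) 0 t"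
      using SD by blast
    have r: "C1r D \<and> C2_real D" using ode_C2[OF Q1 Qnz Qd1 sol] by blast
    thus "C2_real D" by blast
    have "C1r (\<lambda>s. inverse (Q s) * Qd s * (cos (D s))\<^sup>2)"
      using r by (intro C1r_mult C1r_inverse C1r_power2 C1r_cos Q1 Qd1 Qnz) auto
    thus "C2_real (Cfun c m q E \<xi> D)" unfolding CF by (rule exp_C2)
  next
    fix B1 B2 assume "solves_B c m q E \<xi> B1 \<and> solves_B c m q E \<xi> B2"
    thus "B1 = B2" using ode_unique[OF Q1 Qnz Qd1, of "-1" B1 B2] SB by auto
  next
    fix D1 D2 assume "solves_D c m q E \<xi> D1 \<and> solves_D c m q E \<xi> D2"
    thus "D1 = D2" using ode_unique[OF Q1 Qnz Qd1, of 1 D1 D2] SD by auto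
  qed
qed

end
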